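(* Let $V_1,V_2$ be Orlicz functions with $V_1(x)/V_2(x)\to\infty$ as $|x|\to\infty$. Let $\widetilde R:=\sup\{m_{V_2}(\nu):\nu\in\mathscr M_1(\mathbb R),\ m_{V_1}(\nu)\le1\}$ and let $R\in[\widetilde R,\infty)$. Let $X_1^{n,V_1}$ be uniformly distributed on $\mathbb B_1^{n,V_1}$. Then for each fixed $k\in\mathbb N$, $$\lim_{\epsilon\to0}\lim_{n\to\infty}d_w\Big(P\big[(X_1^{n,V_1}(1),\dots,X_1^{n,V_1}(k))\in\cdot\,\big|\,X_1^{n,V_1}\in\mathbb B^{n,V_2}_{R+\epsilon}\big],\ \lambda^{(n,k)}_{1,V_1}\Big)=0,$$ where $d_w$ is a metric inducing weak convergence of probability measures on $\mathbb R^k$ and $\lambda^{(n,k)}_{1,V_1}$ is the distribution of the first $k$ coordinates of a random vector uniformly distributed on $\mathbb B_1^{n,V_1}$.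
   Context: An Orlicz function is a convex, symmetric function $V:\mathbb R\to[0,\infty)$ with $V(0)=0$ and $V(x)>0$ for $x\ne0$. $\mathbb B_R^{n,V}:=\{x\in\mathbb R^n:\sum_kV(x_k)\le Rn\}$. $m_V(\nu):=\int V\,d\nu$. *)

theory Defs
  imports "HOL-Probability.Probability"
begin

definition orlicz :: "(real \<Rightarrow> real) \<Rightarrow> bool" where
  "orlicz V \<longleftrightarrow> convex_on UNIV V \<and> (\<forall>x. V (- x) = V x) \<and> V 0 = 0 \<and> (\<forall>x. x \<noteq> 0 \<longrightarrow> V x > 0)"

abbreviation lebR :: "nat \<Rightarrow> (nat \<Rightarrow> real) measure" where
  "lebR n \<equiv> PiM {..<n} (\<lambda>_. lborel)"

definition orlicz_ball :: "nat \<Rightarrow> (real \<Rightarrow> real) \<Rightarrow> real \<Rightarrow> (nat \<Rightarrow> real) set" where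
  "orlicz_ball n V R = {x \<in> {..<n} \<rightarrow>\<^sub>E UNIV. (\<Sum>i<n. V (x i)) \<le> R * real n}"

text \<open>m_V(nu) = integral of V w.r.t. nu (V \<ge> 0, so as a nonnegative integral).\<close>
definition mV :: "(real \<Rightarrow> real) \<Rightarrow> real measure \<Rightarrow> ennreal" where
  "mV V \<nu> = (\<integral>\<^sup>+ x. ennreal (V x) \<partial>\<nu>)"

definition Rtilde :: "(real \<Rightarrow> real) \<Rightarrow> (real \<Rightarrow> real) \<Rightarrow> ennreal" where
  "Rtilde V1 V2 = (SUP \<nu> \<in> {\<nu>. prob_space \<nu> \<and> sets \<nu> = sets (borel :: real measure) \<and> mV V1 \<nu> \<le> 1}. mV V2 \<nu>)"

text \<open>Law of a random vector uniformly distributed on B_R^{n,V} (canonical version: X = id).\<close>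
definition unif_ball :: "nat \<Rightarrow> (real \<Rightarrow> real) \<Rightarrow> real \<Rightarrow> (nat \<Rightarrow> real) measure" where
  "unif_ball n V R = uniform_measure (lebR n) (orlicz_ball n V R)"

definition cond_prob_measure :: "'a measure \<Rightarrow> 'a set \<Rightarrow> 'a measure" where
  "cond_prob_measure P A = density P (\<lambda>x. indicator A x / emeasure P A)"

definition first_coords :: "nat \<Rightarrow> (nat \<Rightarrow> real) measure \<Rightarrow> (nat \<Rightarrow> real) measure" where
  "first_coords k \<mu> = distr \<mu> (lebR k) (\<lambda>x. restrict x {..<k})"

definition distk :: "nat \<Rightarrow> (nat \<Rightarrow> real) \<Rightarrow> (nat \<Rightarrow> real) \<Rightarrow> real" where
  "distk k x y = sqrt (\<Sum>i<k. (x i - y i)^2)"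

text \<open>Levy-Prokhorov metric on probability measures on R^k (metrizes weak convergence).\<close>
definition prokhorov :: "nat \<Rightarrow> (nat \<Rightarrow> real) measure \<Rightarrow> (nat \<Rightarrow> real) measure \<Rightarrow> real" where
  "prokhorov k \<mu> \<nu> = Inf {e. e > 0 \<and> (\<forall>A \<in> sets (lebR k).
      measure \<mu> A \<le> measure \<nu> {y \<in> space (lebR k). \<exists>x\<in>A. distk k x y < e} + e \<and>
      measure \<nu> A \<le> measure \<mu> {y \<in> space (lebR k). \<exists>x\<in>A. distk k x y < e} + e)}"

end

theory Submission
  imports Defs
begin


lemma orlicz_cont: assumes "orlicz V" shows "continuous_on UNIV V"
  using assms unfolding orlicz_def by (intro convex_on_continuous) auto

lemma orlicz_nonneg: assumes "orlicz V" shows "V t \<ge> 0"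
  using assms unfolding orlicz_def by (cases "t = 0") (auto intro: less_imp_le)

lemma orlicz_small: assumes "orlicz V" shows "\<exists>d>0. \<forall>t. \<bar>t\<bar> \<le> d \<longrightarrow> V t \<le> 1"
proof -
  have "isCont V 0" using orlicz_cont[OF assms] by (simp add: continuous_on_eq_continuous_at)
  moreover have "V 0 = 0" using assms by (simp add: orlicz_def)
  ultimately obtain d where d: "d > 0" "\<forall>t. dist t 0 < d \<longrightarrow> dist (V t) (V 0) < 1"
    unfolding continuous_at_eps_delta by (metis zero_less_one)
  show ?thesis
  proof (intro exI[of _ "d/2"] conjI allI impI)
    fix t :: real assume "\<bar>t\<bar> \<le> d/2"
    then have "dist (V t) (V 0) < 1" using d by auto
    then show "V t \<le> 1" using \<open>V 0 = 0\<close> by (simp add: dist_real_def)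
  qed (use d in auto)
qed

lemma orlicz_growth_pos: assumes "orlicz V" "t \<ge> 1" shows "V t \<ge> t * V 1"
proof -
  have cv: "convex_on UNIV V" and V0: "V 0 = 0" using assms by (auto simp: orlicz_def)
  have "V ((1 - 1/t) *\<^sub>R 0 + (1/t) *\<^sub>R t) \<le> (1 - 1/t) * V 0 + (1/t) * V t"
    using assms(2) by (intro convex_onD[OF cv]) auto
  then have "V 1 \<le> V t / t" using assms(2) V0 by simp
  then show ?thesis using assms(2) by (simp add: field_simps)
qed

lemma orlicz_growth: assumes "orlicz V" "\<bar>t\<bar> \<ge> 1" shows "V t \<ge> \<bar>t\<bar> * V 1"
proof (cases "t \<ge> 0")
  case True then show ?thesis using orlicz_growth_pos[OF assms(1)] assms(2) by simp
next
  case False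
  have "V (-t) \<ge> (-t) * V 1" using orlicz_growth_pos[OF assms(1), of "-t"] assms(2) False by simp
  moreover have "V (-t) = V t" using assms(1) by (simp add: orlicz_def)
  ultimately show ?thesis using False by simp
qed

lemma orlicz_ball_sets: assumes "orlicz V" shows "orlicz_ball n V R \<in> sets (lebR n)"
proof -
  have [measurable]: "V \<in> borel_measurable borel"
    using orlicz_cont[OF assms] by (rule borel_measurable_continuous_onI)
  have "orlicz_ball n V R = {x \<in> space (lebR n). (\<Sum>i<n. V (x i)) \<le> R * real n}"
    by (simp add: orlicz_ball_def space_PiM)
  also have "\<dots> \<in> sets (lebR n)" by measurable
  finally show ?thesis .
qed

lemma orlicz_ball_pos: assumes "orlicz V" shows "emeasure (lebR n) (orlicz_ball n V 1) \<noteq> 0"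
proof -
  obtain d where d: "d > 0" "\<forall>t. \<bar>t\<bar> \<le> d \<longrightarrow> V t \<le> 1" using orlicz_small[OF assms] by blast
  have sub: "PiE {..<n} (\<lambda>_. {-d..d}) \<subseteq> orlicz_ball n V 1"
  proof
    fix x assume x: "x \<in> PiE {..<n} (\<lambda>_. {-d..d})"
    have "(\<Sum>i<n. V (x i)) \<le> (\<Sum>i<n. 1)"
      using x d by (intro sum_mono) (force simp: PiE_iff abs_le_iff)
    then show "x \<in> orlicz_ball n V 1" using x by (auto simp: orlicz_ball_def PiE_iff)
  qed
  have "emeasure (lebR n) (PiE {..<n} (\<lambda>_. {-d..d})) = (\<Prod>i<n. emeasure lborel {-d..d})"
  proof -
    interpret product_sigma_finite "\<lambda>_. lborel" by standard
    show ?thesis by (intro emeasure_PiM) auto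
  qed
  also have "\<dots> = ennreal (2*d) ^ n" using d by simp
  finally have "emeasure (lebR n) (PiE {..<n} (\<lambda>_. {-d..d})) \<noteq> 0" using d by simp
  moreover have "emeasure (lebR n) (PiE {..<n} (\<lambda>_. {-d..d})) \<le> emeasure (lebR n) (orlicz_ball n V 1)"
    by (intro emeasure_mono sub orlicz_ball_sets assms)
  ultimately show ?thesis by (metis le_zero_eq)
qed

lemma orlicz_ball_fin: assumes "orlicz V" shows "emeasure (lebR n) (orlicz_ball n V 1) \<noteq> \<infinity>"
proof -
  define b where "b = max 1 (real n / V 1)"
  have V1: "V 1 > 0" using assms by (simp add: orlicz_def)
  have sub: "orlicz_ball n V 1 \<subseteq> PiE {..<n} (\<lambda>_. {-b..b})"
  proof
    fix x assume x: "x \<in> orlicz_ball n V 1"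
    have "\<bar>x i\<bar> \<le> b" if i: "i < n" for i
    proof (rule ccontr)
      assume "\<not> \<bar>x i\<bar> \<le> b"
      then have big: "\<bar>x i\<bar> > b" by simp
      then have "\<bar>x i\<bar> \<ge> 1" by (simp add: b_def)
      then have "V (x i) \<ge> \<bar>x i\<bar> * V 1" by (rule orlicz_growth[OF assms])
      moreover have "\<bar>x i\<bar> * V 1 > real n"
      proof -
        have "\<bar>x i\<bar> > real n / V 1" using big by (simp add: b_def)
        then show ?thesis using V1 by (simp add: field_simps)
      qed
      moreover have "V (x i) \<le> (\<Sum>j<n. V (x j))"
        using i by (intro member_le_sum) (auto intro: orlicz_nonneg[OF assms])
      ultimately show False using x by (simp add: orlicz_ball_def)
    qed
    then have "\<forall>i<n. -b \<le> x i \<and> x i \<le> b" by (force simp: abs_le_iff)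
    then show "x \<in> PiE {..<n} (\<lambda>_. {-b..b})" using x by (auto simp: orlicz_ball_def PiE_iff)
  qed
  have "emeasure (lebR n) (orlicz_ball n V 1) \<le> emeasure (lebR n) (PiE {..<n} (\<lambda>_. {-b..b}))"
    by (intro emeasure_mono sub) auto
  also have "\<dots> = (\<Prod>i<n. emeasure lborel {-b..b})"
  proof -
    interpret product_sigma_finite "\<lambda>_. lborel" by standard
    show ?thesis by (intro emeasure_PiM) auto
  qed
  also have "\<dots> < \<infinity>"
  proof -
    have "b \<ge> 1" by (simp add: b_def)
    then have "emeasure lborel {-b..b} = ennreal (2*b)" by simp
    then show ?thesis using \<open>b \<ge> 1\<close> by (simp add: ennreal_power)
  qed
  finally show ?thesis by simp
qed



lemma orlicz_meas: "orlicz V \<Longrightarrow> V \<in> borel_measurable borel"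
  using orlicz_cont by (rule borel_measurable_continuous_onI)

lemma R_pos:
  assumes "orlicz V1" "orlicz V2" "Rtilde V1 V2 \<le> ennreal R"
  shows "R > 0"
proof -
  obtain d where d: "d > 0" "\<forall>t. \<bar>t\<bar> \<le> d \<longrightarrow> V1 t \<le> 1" using orlicz_small[OF assms(1)] by blast
  let ?\<nu> = "return borel d"
  note [measurable] = orlicz_meas[OF assms(1)] orlicz_meas[OF assms(2)]
  have m1: "mV V1 ?\<nu> = ennreal (V1 d)" unfolding mV_def by (simp add: nn_integral_return)
  have m2: "mV V2 ?\<nu> = ennreal (V2 d)" unfolding mV_def by (simp add: nn_integral_return)
  have "?\<nu> \<in> {\<nu>. prob_space \<nu> \<and> sets \<nu> = sets (borel :: real measure) \<and> mV V1 \<nu> \<le> 1}"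
    using d m1 by (auto intro: prob_space_return)
  then have "mV V2 ?\<nu> \<le> Rtilde V1 V2" unfolding Rtilde_def by (rule SUP_upper)
  with assms(3) have "ennreal (V2 d) \<le> ennreal R" using m2 by simp
  moreover have "V2 d > 0" using assms(2) d by (simp add: orlicz_def)
  ultimately show ?thesis by (simp add: ennreal_le_iff2)
qed

lemma ball_incl:
  assumes "orlicz V1" "orlicz V2" "Rtilde V1 V2 \<le> ennreal R" "R \<ge> 0"
  shows "orlicz_ball n V1 1 \<subseteq> orlicz_ball n V2 R"
proof
  fix x assume x: "x \<in> orlicz_ball n V1 1"
  show "x \<in> orlicz_ball n V2 R"
  proof (cases "n = 0")
    case True then show ?thesis using x by (simp add: orlicz_ball_def)
  next
    case False
    let ?p = "pmf_of_set {..<n}"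
    let ?\<nu> = "distr (measure_pmf ?p) borel x"
    have ne: "{..<n} \<noteq> {}" using False by auto
    have meas: "x \<in> measurable (measure_pmf ?p) borel" by simp
    have int: "mV V ?\<nu> = ennreal ((\<Sum>i<n. V (x i)) / real n)" if "orlicz V" for V
    proof -
      have "mV V ?\<nu> = (\<integral>\<^sup>+ i. ennreal (V (x i)) \<partial>measure_pmf ?p)"
        unfolding mV_def using orlicz_meas[OF that]
        by (subst nn_integral_distr) auto
      also have "\<dots> = (\<Sum>i<n. ennreal (V (x i))) / of_nat n"
        using ne by (subst nn_integral_pmf_of_set) auto
      also have "\<dots> = ennreal ((\<Sum>i<n. V (x i)) / real n)"
      proof -
        have "(\<Sum>i<n. ennreal (V (x i))) = ennreal (\<Sum>i<n. V (x i))"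
          using orlicz_nonneg[OF that] by (intro sum_ennreal) auto
        moreover have "(of_nat n :: ennreal) = ennreal (real n)"
          by (rule ennreal_of_nat_eq_real_of_nat)
        ultimately show ?thesis using False orlicz_nonneg[OF that]
          by (simp only:) (intro divide_ennreal sum_nonneg, auto)
      qed
      finally show ?thesis .
    qed
    have "?\<nu> \<in> {\<nu>. prob_space \<nu> \<and> sets \<nu> = sets (borel :: real measure) \<and> mV V1 \<nu> \<le> 1}"
    proof -
      have "prob_space ?\<nu>"
        by (rule prob_space.prob_space_distr) (auto simp: prob_space_measure_pmf)
      moreover have "(\<Sum>i<n. V1 (x i)) / real n \<le> 1"
        using x False by (simp add: orlicz_ball_def divide_le_eq)
      then have "ennreal ((\<Sum>i<n. V1 (x i)) / real n) \<le> ennreal 1" by (rule ennreal_leI)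
      then have "mV V1 ?\<nu> \<le> 1" using int[OF assms(1)] by simp
      ultimately show ?thesis by simp
    qed
    then have "mV V2 ?\<nu> \<le> Rtilde V1 V2" unfolding Rtilde_def by (rule SUP_upper)
    with assms(3) int[OF assms(2)] have "ennreal ((\<Sum>i<n. V2 (x i)) / real n) \<le> ennreal R"
      by simp
    then have "(\<Sum>i<n. V2 (x i)) / real n \<le> R"
      using assms(4) by simp
    then have "(\<Sum>i<n. V2 (x i)) \<le> R * real n" using False by (simp add: divide_le_eq)
    then show ?thesis using x by (simp add: orlicz_ball_def)
  qed
qed



lemma distk_L2: "distk k x y = L2_set (\<lambda>i. x i - y i) {..<k}"
  by (simp add: distk_def L2_set_def)

lemma distk_tri: "distk k x z \<le> distk k x y + distk k y z"
proof -
  have "distk k x z = L2_set (\<lambda>i. (x i - y i) + (y i - z i)) {..<k}"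
    by (simp add: distk_L2)
  also have "\<dots> \<le> distk k x y + distk k y z"
    unfolding distk_L2 by (rule L2_set_triangle_ineq)
  finally show ?thesis .
qed

lemma distk_sym: "distk k x y = distk k y x"
  by (simp add: distk_def power2_commute)

lemma distk_meas: "(\<lambda>y. distk k q y) \<in> borel_measurable (lebR k)"
  unfolding distk_def by measurable

lemma distk_le_sum: "distk k x y \<le> (\<Sum>i<k. \<bar>x i - y i\<bar>)"
  unfolding distk_L2 by (rule L2_set_le_sum_abs)

lemma nbhd_sets:
  assumes A: "A \<subseteq> space (lebR k)" and e: "e > 0"
  shows "{y \<in> space (lebR k). \<exists>x\<in>A. distk k x y < e} \<in> sets (lebR k)"
proof -
  define S where "S = space (lebR k)"
  define N where "N = {y \<in> S. \<exists>x\<in>A. distk k x y < e}"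
  define B where "B = (\<lambda>(q, r). {y \<in> S. distk k q y < r})"
  define Q where "Q = {p \<in> PiE {..<k} (\<lambda>_. \<rat>) \<times> \<rat>. B p \<subseteq> N}"
  have cQ: "countable Q"
  proof -
    have "countable (PiE {..<k} (\<lambda>_. \<rat>) \<times> (\<rat> :: real set))"
      by (intro countable_SIGMA countable_PiE countable_rat) auto
    then show ?thesis unfolding Q_def by (rule countable_subset[rotated]) auto
  qed
  have Bs: "B p \<in> sets (lebR k)" for p
  proof (cases p)
    case (Pair q r)
    have [measurable]: "(\<lambda>y. distk k q y) \<in> borel_measurable (lebR k)" by (rule distk_meas)
    show ?thesis unfolding Pair B_def S_def by simp measurable
  qed
  have eq: "N = \<Union>(B ` Q)"
  proof
    show "\<Union>(B ` Q) \<subseteq> N" unfolding Q_def by auto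
  next
    show "N \<subseteq> \<Union>(B ` Q)"
    proof
      fix y assume "y \<in> N"
      then obtain x where y: "y \<in> S" and x: "x \<in> A" and d: "distk k x y < e" unfolding N_def by auto
      define \<delta> where "\<delta> = (e - distk k x y) / 3"
      have \<delta>: "\<delta> > 0" using d by (simp add: \<delta>_def)
      have "\<forall>i. \<exists>r\<in>\<rat>. x i < r \<and> r < x i + \<delta> / (real k + 1)"
        using \<delta> by (auto intro!: Rats_dense_in_real)
      then obtain f where f: "\<And>i. f i \<in> \<rat>" "\<And>i. x i < f i" "\<And>i. f i < x i + \<delta> / (real k + 1)"
        by metis
      define q where "q = restrict f {..<k}"
      have q: "q \<in> PiE {..<k} (\<lambda>_. \<rat>)" using f by (simp add: q_def)
      have "distk k x q \<le> (\<Sum>i<k. \<bar>x i - q i\<bar>)" by (rule distk_le_sum)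
      also have "\<dots> \<le> (\<Sum>i<k. \<delta> / (real k + 1))"
      proof (intro sum_mono)
        fix i assume "i \<in> {..<k}"
        then show "\<bar>x i - q i\<bar> \<le> \<delta> / (real k + 1)"
          unfolding q_def using f(2)[of i] f(3)[of i] by (auto simp: abs_le_iff)
      qed
      also have "\<dots> < \<delta>" using \<delta> by (simp add: field_simps)
      finally have xq: "distk k x q < \<delta>" .
      obtain r where r: "r \<in> \<rat>" "distk k q y < r" "r < distk k q y + \<delta>"
        using \<delta> Rats_dense_in_real[of "distk k q y" "distk k q y + \<delta>"] by auto
      have "B (q, r) \<subseteq> N"
      proof
        fix z assume "z \<in> B (q, r)"
        then have z: "z \<in> S" "distk k q z < r" by (auto simp: B_def)
        have "distk k q y \<le> distk k q x + distk k x y" by (rule distk_tri)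
        then have "distk k x z \<le> distk k x q + distk k q z" by (intro distk_tri)
        moreover have "distk k q x = distk k x q" by (rule distk_sym)
        moreover note \<open>distk k q y \<le> distk k q x + distk k x y\<close> xq z r
        ultimately have "distk k x z < 2 * distk k x q + distk k x y + \<delta>" by linarith
        then have "distk k x z < 3 * \<delta> + distk k x y" using xq by linarith
        moreover have "3 * \<delta> = e - distk k x y" by (simp add: \<delta>_def)
        ultimately have "distk k x z < e" by linarith
        then show "z \<in> N" using z x by (auto simp: N_def)
      qed
      then have "(q, r) \<in> Q" using q r by (simp add: Q_def)
      moreover have "y \<in> B (q, r)" using y r by (simp add: B_def)
      ultimately show "y \<in> \<Union>(B ` Q)" by auto
    qed
  qed
  have "\<Union>(B ` Q) \<in> sets (lebR k)"
    using cQ Bs by (intro sets.countable_UN'') auto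
  then show ?thesis using eq by (simp add: N_def S_def)
qed

lemma prokhorov_self:
  assumes "finite_measure \<mu>" "sets \<mu> = sets (lebR k)"
  shows "prokhorov k \<mu> \<mu> = 0"
proof -
  have sp: "space \<mu> = space (lebR k)" using assms(2) by (rule sets_eq_imp_space_eq)
  have key: "measure \<mu> A \<le> measure \<mu> {y \<in> space (lebR k). \<exists>x\<in>A. distk k x y < e} + e"
    if e: "e > 0" and A: "A \<in> sets (lebR k)" for e :: real and A
  proof -
    have As: "A \<subseteq> space (lebR k)" using A by (rule sets.sets_into_space)
    have "measure \<mu> A \<le> measure \<mu> {y \<in> space (lebR k). \<exists>x\<in>A. distk k x y < e}"
    proof (rule finite_measure.finite_measure_mono[OF assms(1)])
      show "A \<subseteq> {y \<in> space (lebR k). \<exists>x\<in>A. distk k x y < e}"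
        using As e by (auto simp: distk_def intro!: bexI)
      show "{y \<in> space (lebR k). \<exists>x\<in>A. distk k x y < e} \<in> sets \<mu>"
        using nbhd_sets[OF As e] assms(2) by simp
    qed
    then show ?thesis using e by simp
  qed
  have "{e. e > 0 \<and> (\<forall>A \<in> sets (lebR k).
      measure \<mu> A \<le> measure \<mu> {y \<in> space (lebR k). \<exists>x\<in>A. distk k x y < e} + e \<and>
      measure \<mu> A \<le> measure \<mu> {y \<in> space (lebR k). \<exists>x\<in>A. distk k x y < e} + e)} = {0<..}"
    using key by auto
  then show ?thesis unfolding prokhorov_def by simp
qed



lemma restrict_meas: "(\<lambda>x. restrict x {..<k}) \<in> measurable (lebR n) (lebR k)"
proof (rule measurable_restrict)
  fix i assume "i \<in> {..<k}"
  show "(\<lambda>x. x i) \<in> measurable (lebR n) lborel"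
  proof (cases "i < n")
    case True then show ?thesis by (simp add: measurable_component_singleton)
  next
    case False
    have "(\<lambda>x. undefined :: real) \<in> measurable (lebR n) lborel" by simp
    then show ?thesis
      by (rule measurable_cong[THEN iffD1, rotated]) (use False in \<open>auto simp: space_PiM PiE_def extensional_def\<close>)
  qed
qed

lemma cond_eq:
  assumes "orlicz V1" "orlicz V2" "Rtilde V1 V2 \<le> ennreal R" "\<epsilon> > 0"
  shows "cond_prob_measure (unif_ball n V1 1) (orlicz_ball n V2 (R + \<epsilon>)) = unif_ball n V1 1"
proof -
  have R: "R > 0" using R_pos[OF assms(1-3)] .
  let ?B = "orlicz_ball n V1 1" and ?A = "orlicz_ball n V2 (R + \<epsilon>)"
  let ?P = "unif_ball n V1 1"
  have Bs: "?B \<in> sets (lebR n)" and As: "?A \<in> sets (lebR n)"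
    using orlicz_ball_sets[OF assms(1)] orlicz_ball_sets[OF assms(2)] by blast+
  have "?B \<subseteq> orlicz_ball n V2 R" by (rule ball_incl[OF assms(1-3) less_imp_le[OF R]])
  also have "\<dots> \<subseteq> ?A"
  proof
    fix x assume "x \<in> orlicz_ball n V2 R"
    then have x1: "x \<in> {..<n} \<rightarrow>\<^sub>E UNIV" and x2: "(\<Sum>i<n. V2 (x i)) \<le> R * real n"
      unfolding orlicz_ball_def by blast+
    have "R * real n \<le> (R + \<epsilon>) * real n" using assms(4) by (intro mult_right_mono) auto
    with x2 have "(\<Sum>i<n. V2 (x i)) \<le> (R + \<epsilon>) * real n" by linarith
    with x1 show "x \<in> ?A" unfolding orlicz_ball_def by blast
  qed
  finally have sub: "?B \<subseteq> ?A" .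
  have pos: "emeasure (lebR n) ?B \<noteq> 0" and fin: "emeasure (lebR n) ?B \<noteq> \<infinity>"
    using orlicz_ball_pos[OF assms(1)] orlicz_ball_fin[OF assms(1)] by blast+
  have "emeasure ?P ?A = emeasure (lebR n) (?B \<inter> ?A) / emeasure (lebR n) ?B"
    unfolding unif_ball_def by (rule emeasure_uniform_measure[OF Bs As])
  also have "\<dots> = 1"
  proof -
    have "?B \<inter> ?A = ?B" using sub by blast
    then show ?thesis using pos fin by (simp add: top.not_eq_extremum)
  qed
  finally have e1: "emeasure ?P ?A = 1" .
  have AE: "AE x in ?P. indicator ?A x / 1 = (1::ennreal)"
    unfolding unif_ball_def
  proof (rule AE_uniform_measureI[OF Bs], rule AE_I2, rule impI)
    fix x assume "x \<in> ?B"
    then have "x \<in> ?A" using sub by blast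
    then show "indicator ?A x / 1 = (1::ennreal)" by simp
  qed
  have "cond_prob_measure ?P ?A = density ?P (\<lambda>x. indicator ?A x / 1)"
    unfolding cond_prob_measure_def e1 ..
  also have "\<dots> = density ?P (\<lambda>_. 1)"
  proof (rule density_cong[OF _ _ AE])
    have sP: "sets ?P = sets (lebR n)" by (simp add: unif_ball_def)
    note [measurable] = As
    have "(\<lambda>x. indicator ?A x / (1::ennreal)) \<in> borel_measurable (lebR n)" by measurable
    then show "(\<lambda>x. indicator ?A x / (1::ennreal)) \<in> borel_measurable ?P"
      using measurable_cong_sets[OF sP refl] by blast
  qed simp
  also have "\<dots> = ?P" by (rule density_1)
  finally show ?thesis .
qed

lemma unif_prob: assumes "orlicz V" shows "prob_space (unif_ball n V 1)"
  unfolding unif_ball_def using orlicz_ball_pos[OF assms] orlicz_ball_fin[OF assms]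
  by (rule prob_space_uniform_measure)

theorem mainTheorem8:
  fixes V1 V2 :: "real \<Rightarrow> real" and R :: real and k :: nat
  assumes "orlicz V1" and "orlicz V2"
    and "filterlim (\<lambda>x. V1 x / V2 x) at_top at_infinity"
    and "Rtilde V1 V2 \<le> ennreal R"
  shows "\<exists>L :: real \<Rightarrow> real.
     (\<forall>\<epsilon>>0. (\<lambda>n. prokhorov k
         (first_coords k (cond_prob_measure (unif_ball n V1 1) (orlicz_ball n V2 (R + \<epsilon>))))
         (first_coords k (unif_ball n V1 1))) \<longlonglongrightarrow> L \<epsilon>)
     \<and> (L \<longlongrightarrow> 0) (at_right 0)"
proof (intro exI[of _ "\<lambda>_. 0"] conjI allI impI)
  fix \<epsilon> :: real assume e: "\<epsilon> > 0"
  have "prokhorov k (first_coords k (cond_prob_measure (unif_ball n V1 1) (orlicz_ball n V2 (R + \<epsilon>))))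
         (first_coords k (unif_ball n V1 1)) = 0" for n
  proof -
    interpret P: prob_space "unif_ball n V1 1" by (rule unif_prob[OF assms(1)])
    have sP: "sets (unif_ball n V1 1) = sets (lebR n)" by (simp add: unif_ball_def)
    have "(\<lambda>x. restrict x {..<k}) \<in> measurable (unif_ball n V1 1) (lebR k)"
      using restrict_meas by (simp only: measurable_cong_sets[OF sP refl])
    then have "prob_space (first_coords k (unif_ball n V1 1))"
      unfolding first_coords_def by (rule P.prob_space_distr)
    then have "finite_measure (first_coords k (unif_ball n V1 1))"
      using prob_space_def by blast
    then show ?thesis unfolding cond_eq[OF assms(1,2,4) e]
      by (rule prokhorov_self) (simp add: first_coords_def)
  qed
  then show "(\<lambda>n. prokhorov k
         (first_coords k (cond_prob_measure (unif_ball n V1 1) (orlicz_ball n V2 (R + \<epsilon>))))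
         (first_coords k (unif_ball n V1 1))) \<longlonglongrightarrow> 0" by simp
qed simp


end
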